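(* Let $\beta,\gamma,\mu>0$, $0<p<1$, and $\delta=\beta/(\gamma+\mu)$. Consider the temporary adoption model $$S_0'=\mu-\beta S_0A-\mu S_0,\quad S_1'=(1-p)\beta S_0A-\beta S_1A-\mu S_1,\quad A'=\beta(pS_0+S_1)A-(\gamma+\mu)A,\quad R'=\gamma A-\mu R$$ on $\{S_0,S_1,A,R\ge0,\ S_0+S_1+A+R=1\}$. Its equilibria are the contagion-free equilibrium $E_0=(S_0,S_1,A,R)=(1,0,0,0)$ and points with $A\in\{A_1,A_2\}$, where $$A_{1,2}=\tfrac12\Big(1+\tfrac{\gamma}{\mu}\Big)^{-1}\Big[1-2\delta^{-1}\pm\sqrt{1-4(1-p)\delta^{-1}}\Big],$$ and $$S_0=\frac{1}{\delta(\frac{\gamma}{\mu}+1)A+1},\qquad S_1=(1-p)\frac{\delta(\frac{\gamma}{\mu}+1)A}{(\delta(\frac{\gamma}{\mu}+1)A+1)^2},\qquad R=\frac{\gamma}{\mu}A.$$ Call $E_i$ ($i=1,2$) the equilibrium with $A=A_i$ when $A_i$ is real and positive (an endemic equilibrium). Then: (I) If $p<\tfrac12$: for $\delta<4(1-p)$ there are no endemic equilibria; for $4(1-p)\le\delta<\tfrac1p$ there are two endemic equilibria $E_1,E_2$, which coincide when $\delta=4(1-p)$; for $\delta\ge\tfrac1p$ there is a unique endemic equilibrium $E_1$. (II) If $p\ge\tfrac12$: for $\delta\le\tfrac1p$ there is no endemic equilibrium; for $\delta>\tfrac1p$ there is a unique endemic equilibrium $E_1$.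
   Context: $S_0,S_1,A,R$ are the fractions of naive, informed, adopter and removed (former adopter, who never re-adopts) individuals; $\beta$ is the effective contact rate, $\mu$ the per capita demographic turnover rate, $\gamma$ the per capita rate of abandoning adoption, $p$ the probability of adoption on first effective contact with an adopter. $\delta=\beta/(\gamma+\mu)$ is the contact parameter. An endemic equilibrium is an equilibrium with $A>0$ and all components non-negative. *)

theory Defs
  imports Complex_Main
begin

type_synonym state = "real \<times> real \<times> real \<times> real"  (* (S0, S1, A, R) *)

definition ta_field :: "real \<Rightarrow> real \<Rightarrow> real \<Rightarrow> real \<Rightarrow> state \<Rightarrow> state" where
  "ta_field \<beta> \<gamma> \<mu> p = (\<lambda>(S0, S1, A, R).
     (\<mu> - \<beta> * S0 * A - \<mu> * S0,
      (1 - p) * \<beta> * S0 * A - \<beta> * S1 * A - \<mu> * S1,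
      \<beta> * (p * S0 + S1) * A - (\<gamma> + \<mu>) * A,
      \<gamma> * A - \<mu> * R))"

definition ta_domain :: "state set" where
  "ta_domain = {(S0, S1, A, R). S0 \<ge> 0 \<and> S1 \<ge> 0 \<and> A \<ge> 0 \<and> R \<ge> 0 \<and> S0 + S1 + A + R = 1}"

definition ta_equilibria :: "real \<Rightarrow> real \<Rightarrow> real \<Rightarrow> real \<Rightarrow> state set" where
  "ta_equilibria \<beta> \<gamma> \<mu> p = {x \<in> ta_domain. ta_field \<beta> \<gamma> \<mu> p x = (0, 0, 0, 0)}"

definition endemic_equilibria :: "real \<Rightarrow> real \<Rightarrow> real \<Rightarrow> real \<Rightarrow> state set" where
  "endemic_equilibria \<beta> \<gamma> \<mu> p = {(S0, S1, A, R) \<in> ta_equilibria \<beta> \<gamma> \<mu> p. A > 0}"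

definition contact_param :: "real \<Rightarrow> real \<Rightarrow> real \<Rightarrow> real" where
  "contact_param \<beta> \<gamma> \<mu> = \<beta> / (\<gamma> + \<mu>)"

definition A_1 :: "real \<Rightarrow> real \<Rightarrow> real \<Rightarrow> real \<Rightarrow> real" where
  "A_1 \<beta> \<gamma> \<mu> p = (let \<delta> = contact_param \<beta> \<gamma> \<mu> in
     (1/2) * inverse (1 + \<gamma>/\<mu>) * (1 - 2/\<delta> + sqrt (1 - 4*(1-p)/\<delta>)))"

definition A_2 :: "real \<Rightarrow> real \<Rightarrow> real \<Rightarrow> real \<Rightarrow> real" where
  "A_2 \<beta> \<gamma> \<mu> p = (let \<delta> = contact_param \<beta> \<gamma> \<mu> in
     (1/2) * inverse (1 + \<gamma>/\<mu>) * (1 - 2/\<delta> - sqrt (1 - 4*(1-p)/\<delta>)))"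

definition eq_point :: "real \<Rightarrow> real \<Rightarrow> real \<Rightarrow> real \<Rightarrow> real \<Rightarrow> state" where
  "eq_point \<beta> \<gamma> \<mu> p A = (let \<delta> = contact_param \<beta> \<gamma> \<mu>; k = \<delta> * (\<gamma>/\<mu> + 1) * A in
     (1 / (k + 1), (1 - p) * k / (k + 1)^2, A, (\<gamma>/\<mu>) * A))"

end

theory Submission
  imports Defs
begin

lemma eqp: assumes "\<beta> > 0" "\<gamma> > 0" "\<mu> > 0"
  shows "eq_point \<beta> \<gamma> \<mu> p A = (let k = \<beta>*A/\<mu> in (1/(k+1), (1-p)*k/(k+1)^2, A, \<gamma>/\<mu>*A))"
proof -
  have e: "\<gamma>/\<mu>+1 = (\<gamma>+\<mu>)/\<mu>" using assms by (simp add: field_simps)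
  have "contact_param \<beta> \<gamma> \<mu> * (\<gamma>/\<mu>+1) * A = \<beta>*A/\<mu>"
    unfolding e contact_param_def using assms by simp
  then show ?thesis by (simp add: eq_point_def Let_def)
qed

lemma clear_eq:
  fixes x d a b c :: real assumes "x > 0" "d > 0"
  shows "a/x + b/x^2 + c/d = 1 \<longleftrightarrow> a*x*d + b*d + c*x^2 = d*x^2"
proof -
  have "a/x + b/x^2 + c/d = (a*x*d + b*d + c*x^2)/(d*x^2)" using assms
    by (simp add: field_simps power2_eq_square)
  thus ?thesis using assms by (auto simp: divide_eq_1_iff)
qed

lemma eq_pos:
  assumes pos: "\<beta> > 0" "\<gamma> > 0" "\<mu> > 0"
    and mem: "(S0,S1,A,R) \<in> ta_equilibria \<beta> \<gamma> \<mu> p" and Ap: "A > 0"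
  defines "x \<equiv> \<beta>*A/\<mu> + 1"
  shows "(S0,S1,A,R) = eq_point \<beta> \<gamma> \<mu> p A \<and>
         x^2 - contact_param \<beta> \<gamma> \<mu> * x + contact_param \<beta> \<gamma> \<mu> * (1-p) = 0"
proof -
  define k where "k = \<beta>*A/\<mu>"
  define d where "d = contact_param \<beta> \<gamma> \<mu>"
  have d: "d = \<beta>/(\<gamma>+\<mu>)" "d > 0" using pos by (auto simp: d_def contact_param_def)
  have dd: "d*(\<gamma>+\<mu>) = \<beta>" using d pos by simp
  have kp: "k > 0" using pos Ap by (simp add: k_def)
  have bA: "\<beta>*A = \<mu>*k" using pos by (simp add: k_def)
  from mem have h1: "\<mu> - \<beta> * S0 * A - \<mu> * S0 = 0"
    and h2: "(1 - p) * \<beta> * S0 * A - \<beta> * S1 * A - \<mu> * S1 = 0"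
    and h4: "\<gamma> * A - \<mu> * R = 0" and sm: "S0 + S1 + A + R = 1"
    by (auto simp: ta_equilibria_def ta_field_def ta_domain_def)
  have e1: "\<beta>*S0*A = S0*(\<mu>*k)" unfolding bA[symmetric] by (simp add: ac_simps)
  have e1': "\<mu>*(S0*(k+1)) = S0*(\<mu>*k) + \<mu>*S0" by (simp add: algebra_simps)
  have "\<mu> = \<mu> * (S0 * (k+1))" using h1 e1 e1' by linarith
  hence "S0 * (k+1) = 1" using pos by simp
  hence s0: "S0 = 1/(k+1)" using pos kp by (simp add: field_simps)
  have e2: "(1 - p) * \<beta> * S0 * A = (1-p) * (\<mu> * k) * S0" "\<beta> * S1 * A = S1*(\<mu>*k)"
    unfolding bA[symmetric] by (simp_all add: ac_simps)
  have e2': "\<mu> * (S1 * (k+1)) = S1*(\<mu>*k) + \<mu> * S1" by (simp add: algebra_simps)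
  have "(1-p) * \<mu> * k * S0 = \<mu> * (S1 * (k+1))" using h2 e2 e2' by linarith
  hence "(1-p) * k * S0 = S1 * (k+1)" using pos by simp
  hence "S1 * (k+1) = (1-p)*k/(k+1)" using s0 by simp
  hence "S1 = (1-p)*k/(k+1)/(k+1)" using kp by (simp add: eq_divide_eq)
  hence s1: "S1 = (1-p)*k/(k+1)^2" by (simp add: power2_eq_square)
  have r: "R = \<gamma>/\<mu>*A" using h4 pos by (simp add: field_simps)
  have kd: "k/d = A*(\<gamma>+\<mu>)/\<mu>" using pos unfolding k_def d(1) by (simp add: field_simps)
  have "A + R = k/d" unfolding kd r using pos by (simp add: field_simps)
  hence "1/(k+1) + (1-p)*k/(k+1)^2 + k/d = 1" using sm s0 s1 by simp
  hence "1*(k+1)*d + (1-p)*k*d + k*(k+1)^2 = d*(k+1)^2" using kp d(2)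
    by (subst (asm) clear_eq) auto
  hence "k * ((k+1)^2 - d*(k+1) + d*(1-p)) = 0" by (simp add: algebra_simps power2_eq_square)
  hence q: "(k+1)^2 - d*(k+1) + d*(1-p) = 0" using kp by simp
  show ?thesis using q s0 s1 r pos by (simp add: eqp Let_def k_def x_def d_def)
qed

lemma eq_zero:
  assumes pos: "\<beta> > 0" "\<gamma> > 0" "\<mu> > 0"
    and mem: "(S0,S1,A,R) \<in> ta_equilibria \<beta> \<gamma> \<mu> p" and A0: "\<not> A > 0"
  shows "(S0,S1,A,R) = (1,0,0,0)"
proof -
  from mem have "A \<ge> 0" "\<mu> - \<beta> * S0 * A - \<mu> * S0 = 0"
    "(1 - p) * \<beta> * S0 * A - \<beta> * S1 * A - \<mu> * S1 = 0"
    "\<gamma> * A - \<mu> * R = 0"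
    by (auto simp: ta_equilibria_def ta_field_def ta_domain_def)
  with A0 pos show ?thesis by auto
qed

lemma E0: "(1,0,0,0) \<in> ta_equilibria \<beta> \<gamma> \<mu> p"
  by (simp add: ta_equilibria_def ta_field_def ta_domain_def)

lemma eq_conv:
  assumes pos: "\<beta> > 0" "\<gamma> > 0" "\<mu> > 0" "p < 1" "0 < p" and Ap: "A > 0"
    and q: "(\<beta>*A/\<mu> + 1)^2 - contact_param \<beta> \<gamma> \<mu> * (\<beta>*A/\<mu> + 1) + contact_param \<beta> \<gamma> \<mu> * (1-p) = 0"
  shows "eq_point \<beta> \<gamma> \<mu> p A \<in> ta_equilibria \<beta> \<gamma> \<mu> p"
proof -
  define k where "k = \<beta>*A/\<mu>"
  define d where "d = contact_param \<beta> \<gamma> \<mu>"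
  have d: "d = \<beta>/(\<gamma>+\<mu>)" "d > 0" using pos by (auto simp: d_def contact_param_def)
  have dd: "d*(\<gamma>+\<mu>) = \<beta>" using d pos by simp
  have kp: "k > 0" using pos Ap by (simp add: k_def)
  have bA: "\<beta>*A = \<mu>*k" using pos by (simp add: k_def)
  have q': "(k+1)^2 - d*(k+1) + d*(1-p) = 0" using q by (simp add: k_def d_def)
  have kd: "k/d = A*(\<gamma>+\<mu>)/\<mu>" using pos unfolding k_def d(1) by (simp add: field_simps)
  have AR: "A + \<gamma>/\<mu>*A = k/d" unfolding kd using pos by (simp add: field_simps)
  have sum: "1/(k+1) + (1-p)*k/(k+1)^2 + k/d = 1"
  proof -
    have "(k+1) * d + (1-p)*k*d + k*(k+1)^2 = d*(k+1)^2"
      proof -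
      have "1*(k+1) * d + (1-p)*k*d + k*(k+1)^2 - d*(k+1)^2 = k*((k+1)^2 - d*(k+1) + d*(1-p))"
        by (simp add: algebra_simps power2_eq_square)
      thus ?thesis using q' by simp
    qed
    thus ?thesis using kp d(2) by (subst clear_eq) auto
  qed
  have dom: "(1/(k+1), (1-p)*k/(k+1)^2, A, \<gamma>/\<mu>*A) \<in> ta_domain"
    using kp pos Ap sum AR by (simp add: ta_domain_def algebra_simps)
  have f1: "\<mu> - \<beta> * (1/(k+1)) * A - \<mu> * (1/(k+1)) = 0"
    using kp pos bA by (simp add: field_simps; simp add: algebra_simps)
  have f2: "(1 - p) * \<beta> * (1/(k+1)) * A - \<beta> * ((1-p)*k/(k+1)^2) * A - \<mu> * ((1-p)*k/(k+1)^2) = 0"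
  proof -
    have f2': "(1-p)*(\<mu>*k)*(1/(k+1)) - (\<mu>*k)*((1-p)*k/(k+1)^2) - \<mu>*((1-p)*k/(k+1)^2) = 0"
    proof -
      have g: "(1-p)*(\<mu>*(x-1))*(1/x) - (\<mu>*(x-1))*((1-p)*(x-1)/x^2) - \<mu>*((1-p)*(x-1)/x^2) = 0"
        if "x > 0" for x :: real using that by (simp add: field_simps power2_eq_square; simp add: algebra_simps)
      show ?thesis using g[of "k+1"] kp by simp
    qed
    have eqs: "(1-p)*\<beta>*(1/(k+1))*A = (1-p)*(\<mu>*k)*(1/(k+1))"
       "\<beta> * ((1-p)*k/(k+1)^2) * A = (\<mu>*k)*((1-p)*k/(k+1)^2)"
      unfolding bA[symmetric] by (simp_all add: ac_simps)
    show ?thesis using f2' eqs by linarith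
  qed
  have f3: "\<beta> * (p * (1/(k+1)) + (1-p)*k/(k+1)^2) * A - (\<gamma> + \<mu>) * A = 0"
  proof -
    have "d*(k+p) = d*(k+1) - d*(1-p)" by (simp add: algebra_simps)
    hence h: "(k+1)^2 = d*(k+p)" using q' by linarith
    have g: "p*(1/x) + (1-p)*(x-1)/x^2 = (x-1+p)/x^2" if "x > 0" for x :: real
      using that by (simp add: field_simps power2_eq_square; simp add: algebra_simps)
    have "p*(1/(k+1)) + (1-p)*k/(k+1)^2 = (k+p)/(k+1)^2" using g[of "k+1"] kp by simp
    also have "\<dots> = 1/d" unfolding h using kp pos d(2) by simp
    finally have "\<beta> * (p * (1/(k+1)) + (1-p)*k/(k+1)^2) = \<beta>/d" by simp
    also have "\<dots> = \<gamma>+\<mu>" using d pos by simp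
    finally have "\<beta> * (p * (1/(k+1)) + (1-p)*k/(k+1)^2) = (\<gamma>+\<mu>)" .
    thus ?thesis by simp
  qed
  have f4: "\<gamma> * A - \<mu> * (\<gamma>/\<mu>*A) = 0" using pos by simp
  show ?thesis using dom f1 f2 f3 f4 pos
    by (simp add: eqp Let_def k_def[symmetric] ta_equilibria_def ta_field_def)
qed


lemma A12:
  fixes \<beta> \<gamma> \<mu> p :: real
  assumes pos: "\<beta> > 0" "\<gamma> > 0" "\<mu> > 0"
  defines "d \<equiv> contact_param \<beta> \<gamma> \<mu>"
  defines "s \<equiv> sqrt (1 - 4*(1-p)/d)"
  shows "\<beta>*A_1 \<beta> \<gamma> \<mu> p/\<mu> + 1 = (d + d*s)/2"
    "\<beta>*A_2 \<beta> \<gamma> \<mu> p/\<mu> + 1 = (d - d*s)/2"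
proof -
  have dp: "d > 0" using pos by (simp add: d_def contact_param_def)
  have i: "inverse (1+\<gamma>/\<mu>) = \<mu>/(\<gamma>+\<mu>)" using pos by (simp add: field_simps)
  have bd: "\<beta> * (\<mu>/(\<gamma>+\<mu>)) / \<mu> = d" using pos by (simp add: d_def contact_param_def)
  have "\<beta>*A_1 \<beta> \<gamma> \<mu> p/\<mu> = (\<beta> * (\<mu>/(\<gamma>+\<mu>)) / \<mu>) * ((1/2)*(1 - 2/d + s))"
    unfolding A_1_def Let_def i d_def[symmetric] s_def[symmetric] using pos dp by (simp add: field_simps)
  also have "\<dots> = d/2 - 1 + d*s/2" unfolding bd using dp by (simp add: field_simps)
  finally show "\<beta>*A_1 \<beta> \<gamma> \<mu> p/\<mu> + 1 = (d + d*s)/2" by simp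
  have "\<beta>*A_2 \<beta> \<gamma> \<mu> p/\<mu> = (\<beta> * (\<mu>/(\<gamma>+\<mu>)) / \<mu>) * ((1/2)*(1 - 2/d - s))"
    unfolding A_2_def Let_def i d_def[symmetric] s_def[symmetric] using pos dp by (simp add: field_simps)
  also have "\<dots> = d/2 - 1 - d*s/2" unfolding bd using dp by (simp add: field_simps)
  finally show "\<beta>*A_2 \<beta> \<gamma> \<mu> p/\<mu> + 1 = (d - d*s)/2" by simp
qed

lemma roots:
  fixes d p x :: real
  assumes dp: "d > 0"
  defines "s \<equiv> sqrt (1 - 4*(1-p)/d)"
  shows "1 - 4*(1-p)/d \<ge> 0 \<Longrightarrow> ((d + d*s)/2)^2 - d*((d + d*s)/2) + d*(1-p) = 0"
    and "1 - 4*(1-p)/d \<ge> 0 \<Longrightarrow> ((d - d*s)/2)^2 - d*((d - d*s)/2) + d*(1-p) = 0"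
    and "x^2 - d*x + d*(1-p) = 0 \<Longrightarrow> 1 - 4*(1-p)/d \<ge> 0 \<and> (x = (d + d*s)/2 \<or> x = (d - d*s)/2)"
proof -
  assume D: "1 - 4*(1-p)/d \<ge> 0"
  hence s2: "s^2 = 1 - 4*(1-p)/d" by (simp add: s_def)
  have "((d + d*s)/2)^2 - d*((d + d*s)/2) + d*(1-p) = (d^2*(s^2 - 1) + 4*d*(1-p))/4"
    by (simp add: field_simps power2_eq_square; simp add: algebra_simps)
  also have "\<dots> = 0" unfolding s2 using dp by (simp add: field_simps power2_eq_square; simp add: algebra_simps)
  finally show "((d + d*s)/2)^2 - d*((d + d*s)/2) + d*(1-p) = 0" .
next
  assume D: "1 - 4*(1-p)/d \<ge> 0"
  hence s2: "s^2 = 1 - 4*(1-p)/d" by (simp add: s_def)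
  have "((d - d*s)/2)^2 - d*((d - d*s)/2) + d*(1-p) = (d^2*(s^2 - 1) + 4*d*(1-p))/4"
    by (simp add: field_simps power2_eq_square; simp add: algebra_simps)
  also have "\<dots> = 0" unfolding s2 using dp by (simp add: field_simps power2_eq_square; simp add: algebra_simps)
  finally show "((d - d*s)/2)^2 - d*((d - d*s)/2) + d*(1-p) = 0" .
next
  assume q: "x^2 - d*x + d*(1-p) = 0"
  have e: "(2*x - d)^2 = d^2 * (1 - 4*(1-p)/d)"
  proof -
    have "(2*x - d)^2 = 4*(x^2 - d*x + d*(1-p)) + d^2 - 4*d*(1-p)" by (simp add: algebra_simps power2_eq_square)
    also have "\<dots> = d^2 - 4*d*(1-p)" using q by simp
    also have "\<dots> = d^2 * (1 - 4*(1-p)/d)" using dp by (simp add: field_simps power2_eq_square)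
    finally show ?thesis .
  qed
  have D: "1 - 4*(1-p)/d \<ge> 0"
  proof (rule ccontr)
    assume "\<not> ?thesis"
    hence "d^2 * (1 - 4*(1-p)/d) < 0" using dp by (simp add: mult_pos_neg)
    thus False using e by (metis zero_le_power2 not_less)
  qed
  have "sqrt ((2*x - d)^2) = d * s" unfolding e s_def using dp by (simp add: real_sqrt_mult)
  hence "\<bar>2*x - d\<bar> = d*s" by simp
  hence "x = (d + d*s)/2 \<or> x = (d - d*s)/2" by (auto simp: abs_if split: if_splits)
  thus "1 - 4*(1-p)/d \<ge> 0 \<and> (x = (d + d*s)/2 \<or> x = (d - d*s)/2)" using D by simp
qed


lemma eqp3: assumes "\<beta> > 0" "\<gamma> > 0" "\<mu> > 0"
  shows "\<exists>a b c. eq_point \<beta> \<gamma> \<mu> p A = (a,b,A,c)"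
  using assms by (simp add: eqp Let_def)

lemma endemic_char:
  fixes \<beta> \<gamma> \<mu> p :: real
  assumes pos: "\<beta> > 0" "\<gamma> > 0" "\<mu> > 0" "0 < p" "p < 1"
  defines "d \<equiv> contact_param \<beta> \<gamma> \<mu>"
  defines "D \<equiv> 1 - 4*(1-p)/d"
  defines "E1 \<equiv> eq_point \<beta> \<gamma> \<mu> p (A_1 \<beta> \<gamma> \<mu> p)"
      and "E2 \<equiv> eq_point \<beta> \<gamma> \<mu> p (A_2 \<beta> \<gamma> \<mu> p)"
  shows "endemic_equilibria \<beta> \<gamma> \<mu> p =
     (if D \<ge> 0 \<and> A_1 \<beta> \<gamma> \<mu> p > 0 then {E1} else {}) \<union> (if D \<ge> 0 \<and> A_2 \<beta> \<gamma> \<mu> p > 0 then {E2} else {})"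
proof -
  have dp: "d > 0" using pos by (simp add: d_def contact_param_def)
  define s where "s = sqrt (1 - 4*(1-p)/d)"
  have a1: "\<beta>*A_1 \<beta> \<gamma> \<mu> p/\<mu> + 1 = (d + d*s)/2" and a2: "\<beta>*A_2 \<beta> \<gamma> \<mu> p/\<mu> + 1 = (d - d*s)/2"
    using A12[OF pos(1-3), of p] by (simp_all add: d_def s_def)
  have canc: "A = A'" if "\<beta>*A/\<mu> + 1 = \<beta>*A'/\<mu> + 1" for A A'
    using that pos by (simp add: field_simps)
  have sub: "z \<in> (if D \<ge> 0 \<and> A_1 \<beta> \<gamma> \<mu> p > 0 then {E1} else {}) \<union> (if D \<ge> 0 \<and> A_2 \<beta> \<gamma> \<mu> p > 0 then {E2} else {})"
    if z: "z \<in> endemic_equilibria \<beta> \<gamma> \<mu> p" for z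
  proof -
    obtain S0 S1 A R where zz: "z = (S0,S1,A,R)" by (cases z) auto
    have mem: "(S0,S1,A,R) \<in> ta_equilibria \<beta> \<gamma> \<mu> p" and Ap: "A > 0"
      using z zz by (auto simp: endemic_equilibria_def)
    from eq_pos[OF pos(1-3) mem Ap] have ze: "z = eq_point \<beta> \<gamma> \<mu> p A"
      and q: "(\<beta>*A/\<mu>+1)^2 - d*(\<beta>*A/\<mu>+1) + d*(1-p) = 0" by (auto simp: zz d_def)
    from roots(3)[OF dp q] have D: "D \<ge> 0" and
      x: "\<beta>*A/\<mu>+1 = (d + d*s)/2 \<or> \<beta>*A/\<mu>+1 = (d - d*s)/2" by (auto simp: D_def s_def)
    from x show ?thesis
    proof
      assume "\<beta>*A/\<mu>+1 = (d + d*s)/2"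
      hence "A = A_1 \<beta> \<gamma> \<mu> p" using a1 canc by metis
      thus ?thesis using D Ap ze by (simp add: E1_def)
    next
      assume "\<beta>*A/\<mu>+1 = (d - d*s)/2"
      hence "A = A_2 \<beta> \<gamma> \<mu> p" using a2 canc by metis
      thus ?thesis using D Ap ze by (simp add: E2_def)
    qed
  qed
  have E1m: "E1 \<in> endemic_equilibria \<beta> \<gamma> \<mu> p" if "D \<ge> 0" "A_1 \<beta> \<gamma> \<mu> p > 0"
  proof -
    have q: "(\<beta>*A_1 \<beta> \<gamma> \<mu> p/\<mu>+1)^2 - contact_param \<beta> \<gamma> \<mu>*(\<beta>*A_1 \<beta> \<gamma> \<mu> p/\<mu>+1) + contact_param \<beta> \<gamma> \<mu>*(1-p) = 0"
      unfolding a1 d_def[symmetric] using roots(1)[OF dp, of p] that by (simp add: D_def s_def)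
    have "E1 \<in> ta_equilibria \<beta> \<gamma> \<mu> p" unfolding E1_def
      using eq_conv[OF pos(1-3) pos(5) pos(4) that(2) q] .
    moreover obtain a b c where "E1 = (a,b,A_1 \<beta> \<gamma> \<mu> p,c)" using eqp3[OF pos(1-3)] E1_def by blast
    ultimately show ?thesis using that by (simp add: endemic_equilibria_def)
  qed
  have E2m: "E2 \<in> endemic_equilibria \<beta> \<gamma> \<mu> p" if "D \<ge> 0" "A_2 \<beta> \<gamma> \<mu> p > 0"
  proof -
    have q: "(\<beta>*A_2 \<beta> \<gamma> \<mu> p/\<mu>+1)^2 - contact_param \<beta> \<gamma> \<mu>*(\<beta>*A_2 \<beta> \<gamma> \<mu> p/\<mu>+1) + contact_param \<beta> \<gamma> \<mu>*(1-p) = 0"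
      unfolding a2 d_def[symmetric] using roots(2)[OF dp, of p] that by (simp add: D_def s_def)
    have "E2 \<in> ta_equilibria \<beta> \<gamma> \<mu> p" unfolding E2_def
      using eq_conv[OF pos(1-3) pos(5) pos(4) that(2) q] .
    moreover obtain a b c where "E2 = (a,b,A_2 \<beta> \<gamma> \<mu> p,c)" using eqp3[OF pos(1-3)] E2_def by blast
    ultimately show ?thesis using that by (simp add: endemic_equilibria_def)
  qed
  show ?thesis
  proof (intro set_eqI iffI)
    fix z assume "z \<in> endemic_equilibria \<beta> \<gamma> \<mu> p" thus "z \<in> (if D \<ge> 0 \<and> A_1 \<beta> \<gamma> \<mu> p > 0 then {E1} else {}) \<union> (if D \<ge> 0 \<and> A_2 \<beta> \<gamma> \<mu> p > 0 then {E2} else {})" by (rule sub)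
  next
    fix z assume "z \<in> (if D \<ge> 0 \<and> A_1 \<beta> \<gamma> \<mu> p > 0 then {E1} else {}) \<union> (if D \<ge> 0 \<and> A_2 \<beta> \<gamma> \<mu> p > 0 then {E2} else {})"
    thus "z \<in> endemic_equilibria \<beta> \<gamma> \<mu> p" using E1m E2m by (auto split: if_splits)
  qed
qed


lemma Lb: fixes d p t :: real
  assumes "t \<ge> 0" "t^2 = d^2 - 4*d*(1-p)" "d > 0" "p < 1/2" "d \<ge> 4*(1-p)" "d*p < 1"
  shows "d - t > 2"
proof -
  have "4*(1-p) = 4 - 4*p" by simp
  hence "d - 2 > 0" using assms(4,5) by linarith
  moreover have "t^2 < (d-2)^2"
  proof -
    have "(d-2)^2 = d^2 - 4*d + 4" by (simp add: power2_eq_square algebra_simps)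
    moreover have "t^2 = d^2 - 4*d + 4*(d*p)" using assms(2) by (simp add: algebra_simps)
    ultimately show ?thesis using assms(6) by linarith
  qed
  ultimately have "t < d - 2" using power2_less_imp_less[of t "d-2"] by simp
  thus ?thesis by simp
qed

lemma Lc: fixes d p t :: real
  assumes "t \<ge> 0" "t^2 = d^2 - 4*d*(1-p)" "d*p \<ge> 1"
  shows "d - t \<le> 2"
proof (cases "d \<le> 2")
  case True thus ?thesis using assms by linarith
next
  case False
  have "(d-2)^2 \<le> t^2"
  proof -
    have "(d-2)^2 = d^2 - 4*d + 4" by (simp add: power2_eq_square algebra_simps)
    moreover have "t^2 = d^2 - 4*d + 4*(d*p)" using assms(2) by (simp add: algebra_simps)
    ultimately show ?thesis using assms(3) by linarith
  qed
  hence "d - 2 \<le> t" using power2_le_imp_le[of "d-2" t] assms(1) by simp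
  thus ?thesis by simp
qed

lemma Ld: fixes d p t :: real
  assumes "t \<ge> 0" "t^2 = d^2 - 4*d*(1-p)" "d > 0" "p \<ge> 1/2" "d*p \<le> 1"
  shows "d + t \<le> 2"
proof -
  have "d*1 \<le> d*(2*p)" using assms by (intro mult_left_mono) auto
  hence "d \<le> 2*(d*p)" by (simp add: algebra_simps)
  hence "2 - d \<ge> 0" using assms by linarith
  moreover have "t^2 \<le> (2-d)^2"
  proof -
    have "(2-d)^2 = d^2 - 4*d + 4" by (simp add: power2_eq_square algebra_simps)
    moreover have "t^2 = d^2 - 4*d + 4*(d*p)" using assms(2) by (simp add: algebra_simps)
    ultimately show ?thesis using assms(5) by linarith
  qed
  ultimately have "t \<le> 2 - d" using power2_le_imp_le[of t "2-d"] by simp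
  thus ?thesis by simp
qed

lemma Le: fixes d p t :: real
  assumes "t \<ge> 0" "t^2 = d^2 - 4*d*(1-p)" "d*p > 1"
  shows "d + t > 2"
proof (cases "d > 2")
  case True thus ?thesis using assms by linarith
next
  case False
  have "(2-d)^2 < t^2"
  proof -
    have "(2-d)^2 = d^2 - 4*d + 4" by (simp add: power2_eq_square algebra_simps)
    moreover have "t^2 = d^2 - 4*d + 4*(d*p)" using assms(2) by (simp add: algebra_simps)
    ultimately show ?thesis using assms(3) by linarith
  qed
  hence "2 - d < t" using power2_less_imp_less[of "2-d" t] assms(1) by simp
  thus ?thesis by simp
qed

lemma LD: fixes d p :: real
  assumes "d > 0" "0 < p" "p < 1" "d*p \<ge> 1"
  shows "d \<ge> 4*(1-p)"
proof -
  have "(2*p-1)^2 \<ge> 0" by simp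
  moreover have "(2*p-1)^2 = 1 - 4*p*(1-p)" by (simp add: power2_eq_square algebra_simps)
  ultimately have "4*p*(1-p) \<le> 1" by linarith
  have "4*(1-p) \<le> 4*(1-p)*(d*p)" using assms by (simp add: mult_le_cancel_left1)
  also have "\<dots> = d*(4*p*(1-p))" by (simp add: algebra_simps)
  also have "\<dots> \<le> d" using \<open>4*p*(1-p) \<le> 1\<close> assms(1) by (simp add: mult_le_cancel_left1)
  finally show ?thesis .
qed

theorem mainTheorem4:
  fixes \<beta> \<gamma> \<mu> p :: real
  assumes "\<beta> > 0" "\<gamma> > 0" "\<mu> > 0" "0 < p" "p < 1"
  defines "\<delta> \<equiv> contact_param \<beta> \<gamma> \<mu>"
  defines "E1 \<equiv> eq_point \<beta> \<gamma> \<mu> p (A_1 \<beta> \<gamma> \<mu> p)"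
      and "E2 \<equiv> eq_point \<beta> \<gamma> \<mu> p (A_2 \<beta> \<gamma> \<mu> p)"
  shows
    "(ta_equilibria \<beta> \<gamma> \<mu> p =
       {(1, 0, 0, 0)} \<union> ({E1, E2} \<inter> ta_equilibria \<beta> \<gamma> \<mu> p)) \<and>
    (p < 1/2 \<longrightarrow>
       (\<delta> < 4*(1-p) \<longrightarrow> endemic_equilibria \<beta> \<gamma> \<mu> p = {}) \<and>
       (4*(1-p) \<le> \<delta> \<and> \<delta> < 1/p \<longrightarrow>
          A_1 \<beta> \<gamma> \<mu> p > 0 \<and> A_2 \<beta> \<gamma> \<mu> p > 0 \<and>
          endemic_equilibria \<beta> \<gamma> \<mu> p = {E1, E2} \<and>
          (\<delta> = 4*(1-p) \<longrightarrow> E1 = E2) \<and> (\<delta> > 4*(1-p) \<longrightarrow> E1 \<noteq> E2)) \<and>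
       (\<delta> \<ge> 1/p \<longrightarrow> A_1 \<beta> \<gamma> \<mu> p > 0 \<and> endemic_equilibria \<beta> \<gamma> \<mu> p = {E1})) \<and>
    (p \<ge> 1/2 \<longrightarrow>
       (\<delta> \<le> 1/p \<longrightarrow> endemic_equilibria \<beta> \<gamma> \<mu> p = {}) \<and>
       (\<delta> > 1/p \<longrightarrow> A_1 \<beta> \<gamma> \<mu> p > 0 \<and> endemic_equilibria \<beta> \<gamma> \<mu> p = {E1}))"
proof -
  note pos = assms(1-5)
  have dp: "\<delta> > 0" using pos by (simp add: \<delta>_def contact_param_def)
  define D where "D = 1 - 4*(1-p)/\<delta>"
  define s where "s = sqrt D"
  define t where "t = \<delta>*s"
  have ec: "endemic_equilibria \<beta> \<gamma> \<mu> p =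
     (if D \<ge> 0 \<and> A_1 \<beta> \<gamma> \<mu> p > 0 then {E1} else {}) \<union> (if D \<ge> 0 \<and> A_2 \<beta> \<gamma> \<mu> p > 0 then {E2} else {})"
    using endemic_char[OF pos] by (simp add: D_def \<delta>_def E1_def E2_def)
  have a1: "\<beta>*A_1 \<beta> \<gamma> \<mu> p/\<mu> + 1 = (\<delta> + t)/2" and a2: "\<beta>*A_2 \<beta> \<gamma> \<mu> p/\<mu> + 1 = (\<delta> - t)/2"
    using A12[OF pos(1-3), of p] by (simp_all add: \<delta>_def t_def s_def D_def)
  have posA: "A > 0 \<longleftrightarrow> \<beta>*A/\<mu> > 0" for A using pos by (simp add: zero_less_divide_iff zero_less_mult_iff)
  have "\<beta>*A_1 \<beta> \<gamma> \<mu> p/\<mu> = (\<delta> + t)/2 - 1" using a1 by linarith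
  hence A1p: "A_1 \<beta> \<gamma> \<mu> p > 0 \<longleftrightarrow> \<delta> + t > 2" using posA[of "A_1 \<beta> \<gamma> \<mu> p"] by simp
  have "\<beta>*A_2 \<beta> \<gamma> \<mu> p/\<mu> = (\<delta> - t)/2 - 1" using a2 by linarith
  hence A2p: "A_2 \<beta> \<gamma> \<mu> p > 0 \<longleftrightarrow> \<delta> - t > 2" using posA[of "A_2 \<beta> \<gamma> \<mu> p"] by simp
  have tf: "t \<ge> 0 \<and> t^2 = \<delta>^2 - 4*\<delta>*(1-p)" if "D \<ge> 0"
  proof
    show "t \<ge> 0" using dp that by (simp add: t_def s_def)
    have "t^2 = \<delta>^2 * D" using that by (simp add: t_def s_def power_mult_distrib)
    also have "\<dots> = \<delta>^2 - 4*\<delta>*(1-p)" using dp by (simp add: D_def field_simps power2_eq_square)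
    finally show "t^2 = \<delta>^2 - 4*\<delta>*(1-p)" .
  qed
  have Dge: "D \<ge> 0 \<longleftrightarrow> 4*(1-p) \<le> \<delta>" using dp by (simp add: D_def divide_le_eq)
  have D0: "D = 0 \<longleftrightarrow> \<delta> = 4*(1-p)" using dp by (auto simp: D_def field_simps)
  have t0: "t = 0 \<longleftrightarrow> D = 0" using dp by (simp add: t_def s_def)
  have canc: "A = A'" if "\<beta>*A/\<mu> + 1 = \<beta>*A'/\<mu> + 1" for A A'
    using that pos by (simp add: field_simps)
  have A12eq: "A_1 \<beta> \<gamma> \<mu> p = A_2 \<beta> \<gamma> \<mu> p \<longleftrightarrow> t = 0"
  proof
    assume "A_1 \<beta> \<gamma> \<mu> p = A_2 \<beta> \<gamma> \<mu> p" thus "t = 0" using a1 a2 by simp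
  next
    assume "t = 0"
    hence "\<beta>*A_1 \<beta> \<gamma> \<mu> p/\<mu> + 1 = \<beta>*A_2 \<beta> \<gamma> \<mu> p/\<mu> + 1" unfolding a1 a2 by simp
    thus "A_1 \<beta> \<gamma> \<mu> p = A_2 \<beta> \<gamma> \<mu> p" by (rule canc)
  qed
  have E12: "E1 = E2 \<longleftrightarrow> A_1 \<beta> \<gamma> \<mu> p = A_2 \<beta> \<gamma> \<mu> p"
  proof
    assume e: "E1 = E2"
    obtain a b c where 1: "E1 = (a,b,A_1 \<beta> \<gamma> \<mu> p,c)" using eqp3[OF pos(1-3)] E1_def by blast
    obtain a' b' c' where 2: "E2 = (a',b',A_2 \<beta> \<gamma> \<mu> p,c')" using eqp3[OF pos(1-3)] E2_def by blast
    show "A_1 \<beta> \<gamma> \<mu> p = A_2 \<beta> \<gamma> \<mu> p" using e 1 2 by simp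
  next
    assume "A_1 \<beta> \<gamma> \<mu> p = A_2 \<beta> \<gamma> \<mu> p" thus "E1 = E2" by (simp add: E1_def E2_def)
  qed
  have lt: "\<delta> < 1/p \<longleftrightarrow> \<delta>*p < 1" "\<delta> \<le> 1/p \<longleftrightarrow> \<delta>*p \<le> 1" using pos by (simp_all add: less_divide_eq le_divide_eq)
  have part1: "ta_equilibria \<beta> \<gamma> \<mu> p = {(1, 0, 0, 0)} \<union> ({E1, E2} \<inter> ta_equilibria \<beta> \<gamma> \<mu> p)"
  proof (intro set_eqI iffI)
    fix z assume z: "z \<in> ta_equilibria \<beta> \<gamma> \<mu> p"
    obtain S0 S1 A R where zz: "z = (S0,S1,A,R)" by (cases z) auto
    show "z \<in> {(1, 0, 0, 0)} \<union> ({E1, E2} \<inter> ta_equilibria \<beta> \<gamma> \<mu> p)"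
    proof (cases "A > 0")
      case True
      hence "z \<in> endemic_equilibria \<beta> \<gamma> \<mu> p" using z zz by (simp add: endemic_equilibria_def)
      hence "z = E1 \<or> z = E2" unfolding ec by (auto split: if_splits)
      thus ?thesis using z by auto
    next
      case False
      thus ?thesis using eq_zero[OF pos(1-3), of S0 S1 A R p] z zz by simp
    qed
  next
    fix z assume "z \<in> {(1, 0, 0, 0)} \<union> ({E1, E2} \<inter> ta_equilibria \<beta> \<gamma> \<mu> p)"
    thus "z \<in> ta_equilibria \<beta> \<gamma> \<mu> p" using E0 by auto
  qed
  have part2: "p < 1/2 \<longrightarrow>
       (\<delta> < 4*(1-p) \<longrightarrow> endemic_equilibria \<beta> \<gamma> \<mu> p = {}) \<and>
       (4*(1-p) \<le> \<delta> \<and> \<delta> < 1/p \<longrightarrow>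
          A_1 \<beta> \<gamma> \<mu> p > 0 \<and> A_2 \<beta> \<gamma> \<mu> p > 0 \<and>
          endemic_equilibria \<beta> \<gamma> \<mu> p = {E1, E2} \<and>
          (\<delta> = 4*(1-p) \<longrightarrow> E1 = E2) \<and> (\<delta> > 4*(1-p) \<longrightarrow> E1 \<noteq> E2)) \<and>
       (\<delta> \<ge> 1/p \<longrightarrow> A_1 \<beta> \<gamma> \<mu> p > 0 \<and> endemic_equilibria \<beta> \<gamma> \<mu> p = {E1})"
  proof (intro impI conjI)
    assume p2: "p < 1/2"
    { assume "\<delta> < 4*(1-p)"
      thus "endemic_equilibria \<beta> \<gamma> \<mu> p = {}" unfolding ec using Dge by auto }
    { assume h: "4*(1-p) \<le> \<delta> \<and> \<delta> < 1/p"
      hence D: "D \<ge> 0" using Dge by simp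
      have dp1: "\<delta>*p < 1" using h lt by simp
      have "\<delta> - t > 2" using Lb[of t \<delta> p] tf[OF D] dp p2 h dp1 by simp
      moreover have "\<delta> + t > 2" using calculation tf[OF D] by linarith
      ultimately show A1: "A_1 \<beta> \<gamma> \<mu> p > 0" and A2: "A_2 \<beta> \<gamma> \<mu> p > 0" using A1p A2p by auto
      show "endemic_equilibria \<beta> \<gamma> \<mu> p = {E1, E2}" unfolding ec using D A1 A2 by auto
      { assume "\<delta> = 4*(1-p)" thus "E1 = E2" using E12 A12eq t0 D0 by simp }
      { assume "\<delta> > 4*(1-p)" thus "E1 \<noteq> E2" using E12 A12eq t0 D0 by auto } }
    { assume h: "\<delta> \<ge> 1/p"
      have dp1: "\<delta>*p \<ge> 1" using h lt by linarith
      have D: "D \<ge> 0" using Dge LD[of \<delta> p] dp1 dp pos by simp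
      have "\<delta> - t \<le> 2" using Lc[of t \<delta> p] tf[OF D] dp1 by simp
      have "\<delta>*p < \<delta>*(1/2)" using dp p2 by (intro mult_strict_left_mono) auto
      hence d2: "\<delta> > 2" using dp1 by simp
      have "\<delta> + t > 2" using tf[OF D] d2 by linarith
      show A1: "A_1 \<beta> \<gamma> \<mu> p > 0" using A1p \<open>\<delta> + t > 2\<close> by simp
      show "endemic_equilibria \<beta> \<gamma> \<mu> p = {E1}" unfolding ec using D A1 A2p \<open>\<delta> - t \<le> 2\<close> by auto }
  qed
  have part3: "p \<ge> 1/2 \<longrightarrow>
       (\<delta> \<le> 1/p \<longrightarrow> endemic_equilibria \<beta> \<gamma> \<mu> p = {}) \<and>
       (\<delta> > 1/p \<longrightarrow> A_1 \<beta> \<gamma> \<mu> p > 0 \<and> endemic_equilibria \<beta> \<gamma> \<mu> p = {E1})"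
  proof (intro impI conjI)
    assume p2: "p \<ge> 1/2"
    { assume h: "\<delta> \<le> 1/p"
      have dp1: "\<delta>*p \<le> 1" using h lt by simp
      have "\<not> (D \<ge> 0 \<and> A_1 \<beta> \<gamma> \<mu> p > 0)"
      proof
        assume c: "D \<ge> 0 \<and> A_1 \<beta> \<gamma> \<mu> p > 0"
        have "\<delta> + t \<le> 2" using Ld[of t \<delta> p] tf c dp p2 dp1 by simp
        thus False using c A1p by simp
      qed
      moreover have "\<not> (D \<ge> 0 \<and> A_2 \<beta> \<gamma> \<mu> p > 0)"
      proof
        assume c: "D \<ge> 0 \<and> A_2 \<beta> \<gamma> \<mu> p > 0"
        have "\<delta> + t \<le> 2" using Ld[of t \<delta> p] tf c dp p2 dp1 by simp
        moreover have "\<delta> - t > 2" using c A2p by simp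
        moreover have "t \<ge> 0" using tf c by simp
        ultimately show False by linarith
      qed
      ultimately show "endemic_equilibria \<beta> \<gamma> \<mu> p = {}" unfolding ec by simp }
    { assume h: "\<delta> > 1/p"
      have dp1: "\<delta>*p > 1" using h lt by linarith
      have D: "D \<ge> 0" using Dge LD[of \<delta> p] dp1 dp pos by simp
      have "\<delta> - t \<le> 2" using Lc[of t \<delta> p] tf[OF D] dp1 by simp
      have "\<delta> + t > 2" using Le[of t \<delta> p] tf[OF D] dp1 by simp
      show A1: "A_1 \<beta> \<gamma> \<mu> p > 0" using A1p \<open>\<delta> + t > 2\<close> by simp
      show "endemic_equilibria \<beta> \<gamma> \<mu> p = {E1}" unfolding ec using D A1 A2p \<open>\<delta> - t \<le> 2\<close> by auto }
  qed
  show ?thesis using part1 part2 part3 by blast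
qed

end
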